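(* Suppose $\rho>\max\left\{-\frac{\sigma_x^2+3\sigma_y^2}{4\sigma_x\sigma_y},\,-\frac{3\sigma_x^2+\sigma_y^2}{4\sigma_x\sigma_y}\right\}$. Then $(\mathbf a^*,\mathbf b^* )$ is a local equilibrium of $K$: all four first-order partial derivatives of $K(\mathbf a,\mathbf b)$ with respect to $x_1,y_1,x_2,y_2$ vanish at $(\mathbf a^*,\mathbf b^* )$, the point $\mathbf a^*$ is a strict local minimizer of $\mathbf a\mapsto K(\mathbf a,\mathbf b^* )$, and $\mathbf b^*$ is a strict local maximizer of $\mathbf b\mapsto K(\mathbf a^*,\mathbf b)$.
   Context: Standing setup. Fix $\sigma_x,\sigma_y>0$ and $\rho\in(-1,1)$, and let $(\xi,\eta)$ be a bivariate normal random vector with mean $(0,0)$ and covariance matrix $\Sigma=\begin{pmatrix}\sigma_x^2&\rho\sigma_x\sigma_y\\ \rho\sigma_x\sigma_y&\sigma_y^2\end{pmatrix}$. Player I (the minimizer) chooses $\mathbf a=(x_1,y_1)\in\mathbb R^2$ and Player II (the maximizer) chooses $\mathbf b=(x_2,y_2)\in\mathbb R^2$. Let $C_1(\mathbf a,\mathbf b)=\{(x,y):(x_1-x)^2+(y_1-y)^2<(x_2-x)^2+(y_2-y)^2\}$ and $C_2(\mathbf a,\mathbf b)=\{(x,y):(x_1-x)^2+(y_1-y)^2>(x_2-x)^2+(y_2-y)^2\}$. The payoff to Player II (paid by Player I) is $K(\mathbf a,\mathbf b)=x_1+y_1$ if $\mathbf a=\mathbf b$, and $K(\mathbf a,\mathbf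 b)=(x_1+y_1)\,P((\xi,\eta)\in C_1(\mathbf a,\mathbf b))+(x_2+y_2)\,P((\xi,\eta)\in C_2(\mathbf a,\mathbf b))$ if $\mathbf a\neq\mathbf b$. For $\mathbf a=(x,y)$ write $-\mathbf a=(-x,-y)$. Let $x_2^*=\frac{\sqrt{2\pi(\sigma_x^2+2\rho\sigma_x\sigma_y+\sigma_y^2)}}{4}$, $\mathbf b^*=(x_2^*,x_2^* )$ and $\mathbf a^*=(-x_2^*,-x_2^* )$. *)

theory Defs
  imports "HOL-Analysis.Analysis"
begin

definition bvn_density :: "real \<Rightarrow> real \<Rightarrow> real \<Rightarrow> real \<times> real \<Rightarrow> real" where
  "bvn_density sx sy r z =
     exp (- (1 / (2 * (1 - r^2))) *
            ((fst z)^2 / sx^2 - 2 * r * fst z * snd z / (sx * sy) + (snd z)^2 / sy^2))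
     / (2 * pi * sx * sy * sqrt (1 - r^2))"

definition bvn :: "real \<Rightarrow> real \<Rightarrow> real \<Rightarrow> (real \<times> real) measure" where
  "bvn sx sy r = density lborel (\<lambda>z. ennreal (bvn_density sx sy r z))"

definition C1 :: "real \<times> real \<Rightarrow> real \<times> real \<Rightarrow> (real \<times> real) set" where
  "C1 a b = {(x, y). (fst a - x)^2 + (snd a - y)^2 < (fst b - x)^2 + (snd b - y)^2}"

definition C2 :: "real \<times> real \<Rightarrow> real \<times> real \<Rightarrow> (real \<times> real) set" where
  "C2 a b = {(x, y). (fst a - x)^2 + (snd a - y)^2 > (fst b - x)^2 + (snd b - y)^2}"

definition Kpay :: "real \<Rightarrow> real \<Rightarrow> real \<Rightarrow> real \<times> real \<Rightarrow> real \<times> real \<Rightarrow> real" where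
  "Kpay sx sy r a b =
     (if a = b then fst a + snd a
      else (fst a + snd a) * measure (bvn sx sy r) (C1 a b)
         + (fst b + snd b) * measure (bvn sx sy r) (C2 a b))"

definition xstar :: "real \<Rightarrow> real \<Rightarrow> real \<Rightarrow> real" where
  "xstar sx sy r = sqrt (2 * pi * (sx^2 + 2 * r * sx * sy + sy^2)) / 4"

end

theory Submission
  imports Defs "HOL-Probability.Probability"
begin

definition NN :: "real measure" where
  "NN = density lborel (\<lambda>x. ennreal (std_normal_density x))"

definition Phi :: "real \<Rightarrow> real" where
  "Phi t = measure NN {..<t}"

lemma prob_NN: "prob_space NN"
  unfolding NN_def by (rule prob_space_normal_density) simp

lemma sets_NN[simp]: "sets NN = sets borel"
  unfolding NN_def by simp

lemma emeasure_NN: "A \<in> sets borel \<Longrightarrow> emeasure NN A = (\<integral>\<^sup>+x. ennreal (std_normal_density x) * indicator A x \<partial>lborel)"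
  unfolding NN_def by (simp add: emeasure_density)

lemma NN_singleton: "measure NN {c} = 0"
proof -
  have "emeasure NN {c} = (\<integral>\<^sup>+x. ennreal (std_normal_density x) * indicator {c} x \<partial>lborel)"
    by (simp add: emeasure_NN)
  also have "\<dots> = (\<integral>\<^sup>+(x::real). 0 \<partial>lborel)"
  proof (rule nn_integral_cong_AE)
    show "AE x in lborel. ennreal (std_normal_density x) * indicator {c} x = 0"
      using AE_lborel_singleton[of c] by eventually_elim (auto simp: indicator_def)
  qed
  finally show ?thesis by (simp add: measure_def)
qed

lemma Phi_nonneg: "0 \<le> Phi t" by (simp add: Phi_def)

lemma emeasure_NN_lessThan: "emeasure NN {..<t} = ennreal (Phi t)"
proof -
  interpret prob_space NN by (rule prob_NN)
  show ?thesis unfolding Phi_def by (simp add: emeasure_eq_measure)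
qed

lemma Phi_nn: "(\<integral>\<^sup>+x. ennreal (std_normal_density x) * indicator {..<t} x \<partial>lborel) = ennreal (Phi t)"
  using emeasure_NN_lessThan[of t] by (simp add: emeasure_NN)

lemma Phi_minus: "Phi (- t) = 1 - Phi t"
proof -
  interpret prob_space NN by (rule prob_NN)
  have "emeasure NN {..<-t} = (\<integral>\<^sup>+x. ennreal (std_normal_density x) * indicator {..<-t} x \<partial>lborel)"
    by (simp add: emeasure_NN)
  also have "\<dots> = ennreal \<bar>-1::real\<bar> * (\<integral>\<^sup>+x. ennreal (std_normal_density (0 + -1 * x)) * indicator {..<-t} (0 + -1*x) \<partial>lborel)"
    by (rule nn_integral_real_affine) auto
  also have "\<dots> = (\<integral>\<^sup>+x. ennreal (std_normal_density x) * indicator {t<..} x \<partial>lborel)"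
    by (simp, intro nn_integral_cong) (auto simp: normal_density_def indicator_def)
  also have "\<dots> = emeasure NN {t<..}" by (simp add: emeasure_NN)
  finally have 1: "measure NN {..<-t} = measure NN {t<..}" by (simp add: measure_def)
  have "measure NN {t<..} = 1 - measure NN {..t}"
  proof -
    have "measure NN ({t<..}) = measure NN (space NN - {..t})"
      by (simp add: NN_def, intro arg_cong[where f="measure _"]) auto
    also have "\<dots> = 1 - measure NN {..t}" by (rule prob_compl) simp
    finally show ?thesis .
  qed
  moreover have "measure NN {..t} = measure NN {..<t} + measure NN {t}"
    by (subst finite_measure_Union[symmetric]) (auto intro!: arg_cong[where f="measure _"])
  ultimately show ?thesis using 1 NN_singleton[of t] by (simp add: Phi_def)
qed

lemma Phi_0: "Phi 0 = 1/2"
  using Phi_minus[of 0] by simp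

lemma cont_phi: "continuous_on S std_normal_density"
  unfolding normal_density_def by (intro continuous_intros) auto

lemma Phi_diff: assumes "a \<le> b" shows "Phi b - Phi a = integral {a..b} std_normal_density"
proof -
  interpret prob_space NN by (rule prob_NN)
  have "measure NN {..<b} = measure NN ({..<a} \<union> {a..<b})"
    using assms by (intro arg_cong[where f="measure _"]) auto
  also have "\<dots> = measure NN {..<a} + measure NN {a..<b}"
    by (rule finite_measure_Union) auto
  finally have 1: "Phi b - Phi a = measure NN {a..<b}" by (simp add: Phi_def)
  have "emeasure NN {a..<b} = (\<integral>\<^sup>+x. ennreal (std_normal_density x) * indicator {a..<b} x \<partial>lborel)"
    by (simp add: emeasure_NN)
  also have "\<dots> = (\<integral>\<^sup>+x. ennreal (std_normal_density x) * indicator {a..b} x \<partial>lborel)"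
  proof (rule nn_integral_cong_AE)
    show "AE x in lborel. ennreal (std_normal_density x) * indicator {a..<b} x = ennreal (std_normal_density x) * indicator {a..b} x"
      using AE_lborel_singleton[of b] by eventually_elim (auto simp: indicator_def)
  qed
  also have "\<dots> = ennreal (integral {a..b} std_normal_density)"
    by (rule nn_integral_has_integral_lebesgue') (auto intro!: integrable_integral integrable_continuous_interval cont_phi)
  moreover have "0 \<le> integral {a..b} std_normal_density"
    by (rule integral_nonneg) (auto intro: integrable_continuous_interval cont_phi)
  ultimately have "measure NN {a..<b} = integral {a..b} std_normal_density"
    by (simp add: measure_def)
  with 1 show ?thesis by simp
qed

lemma DERIV_Phi: "(Phi has_real_derivative std_normal_density x) (at x)"
proof -
  have d: "((\<lambda>y. integral {x-1..y} std_normal_density) has_real_derivative std_normal_density x) (at x within {x-1..x+1})"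
    by (rule integral_has_real_derivative) (auto intro: cont_phi)
  have "at x within {x-1..x+1} = at x"
    by (intro at_within_interior) auto
  with d have d2: "((\<lambda>y. Phi (x-1) + integral {x-1..y} std_normal_density) has_real_derivative std_normal_density x) (at x)"
    by (auto intro!: derivative_eq_intros)
  show ?thesis
  proof (rule has_field_derivative_transform_within_open[OF d2, of "{x-1<..}"])
    fix y assume "y \<in> {x-1<..}"
    then show "Phi (x - 1) + integral {x - 1..y} std_normal_density = Phi y"
      using Phi_diff[of "x-1" y] by simp
  qed auto
qed

definition phi0 :: real where "phi0 = 1 / sqrt (2*pi)"

lemma phi0_pos: "phi0 > 0" by (simp add: phi0_def)

lemma phi_le: "std_normal_density t \<le> phi0"
proof -
  have "exp (-(t^2/2)) \<le> 1" by simp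
  then have "exp (-(t^2/2)) / sqrt (2*pi) \<le> 1 / sqrt (2*pi)" by (intro divide_right_mono) auto
  then show ?thesis by (simp add: std_normal_density_def phi0_def)
qed

lemma phi_ge: "phi0 * (1 - t^2/2) \<le> std_normal_density t"
proof -
  have "1 + (-(t^2/2)) \<le> exp (-(t^2/2))" by (rule exp_ge_add_one_self)
  then have "(1 - t^2/2) / sqrt (2*pi) \<le> exp (-(t^2/2)) / sqrt (2*pi)" by (intro divide_right_mono) auto
  then show ?thesis using phi0_pos by (simp add: std_normal_density_def phi0_def)
qed

lemma Phi_bound_pos:
  assumes "0 \<le> c"
  shows "Phi c \<le> 1/2 + phi0 * c" "1/2 + phi0 * c - phi0 * c^3/6 \<le> Phi c"
proof -
  have "(\<lambda>t. 1/2 + phi0 * t - Phi t) 0 \<le> (\<lambda>t. 1/2 + phi0 * t - Phi t) c"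
    by (rule DERIV_nonneg_imp_nondecreasing[OF assms])
      (auto intro!: exI derivative_eq_intros DERIV_Phi simp: phi_le)
  then show "Phi c \<le> 1/2 + phi0 * c" by (simp add: Phi_0)
  have "(\<lambda>t. Phi t - 1/2 - phi0 * t + phi0 * t^3/6) 0 \<le> (\<lambda>t. Phi t - 1/2 - phi0 * t + phi0 * t^3/6) c"
  proof (rule DERIV_nonneg_imp_nondecreasing[OF assms], rule exI, rule conjI)
    fix x
    show "DERIV (\<lambda>t. Phi t - 1/2 - phi0 * t + phi0 * t^3/6) x :> std_normal_density x - phi0 + phi0 * x^2/2"
      by (auto intro!: derivative_eq_intros DERIV_Phi simp: algebra_simps)
    show "0 \<le> std_normal_density x - phi0 + phi0 * x^2/2"
      using phi_ge[of x] by (simp add: algebra_simps)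
  qed
  then show "1/2 + phi0 * c - phi0 * c^3/6 \<le> Phi c" by (simp add: Phi_0)
qed

lemma Phi_bound: "\<bar>Phi c - 1/2 - phi0 * c\<bar> \<le> phi0 * \<bar>c\<bar>^3/6"
proof (cases "0 \<le> c")
  case True
  then show ?thesis using Phi_bound_pos[OF True] by (simp add: abs_if)
next
  case False
  then have "0 \<le> -c" by simp
  from Phi_bound_pos[OF this] have 1: "1 - Phi c \<le> 1/2 - phi0 * c" "1/2 - phi0 * c + phi0 * c^3/6 \<le> 1 - Phi c"
    by (simp_all add: Phi_minus)
  have 2: "abs c ^ 3 = - (c ^ 3)" using False by (simp add: abs_if)
  show ?thesis unfolding 2 using 1 by (simp add: abs_if)
qed

lemma phi0_cube: "phi0 * \<bar>c\<bar>^3/6 \<le> 2 * \<bar>phi0 * c\<bar>^3"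
proof -
  have "phi0 * \<bar>c\<bar>^3/6 = \<bar>phi0 * c\<bar>^3 * (1 / (6 * phi0^2))"
    using phi0_pos by (simp add: abs_mult power_mult_distrib field_simps power3_eq_cube power2_eq_square)
  also have "1 / (6 * phi0^2) = pi / 3" by (simp add: phi0_def power_divide)
  also have "\<bar>phi0 * c\<bar>^3 * (pi/3) \<le> \<bar>phi0 * c\<bar>^3 * 2"
    using pi_less_4 by (intro mult_left_mono) auto
  finally show ?thesis by simp
qed

lemma nd_affine_eq:
  assumes "0 < \<sigma>" "c \<noteq> 0"
  shows "\<bar>c\<bar> * normal_density (c * \<mu> + e) (\<bar>c\<bar> * \<sigma>) (e + c * y) = normal_density \<mu> \<sigma> y"
  using assms
  by (simp add: normal_density_def real_sqrt_mult field_simps power2_eq_square)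

lemma G1:
  assumes "0 < \<sigma>" "c \<noteq> 0"
  shows "(\<integral>\<^sup>+y. ennreal (normal_density \<mu> \<sigma> y) * indicator {y. c*y + e < m} y \<partial>lborel)
       = (\<integral>\<^sup>+z. ennreal (normal_density (c * \<mu> + e) (\<bar>c\<bar> * \<sigma>) z) * indicator {..<m} z \<partial>lborel)"
proof -
  have "(\<integral>\<^sup>+z. ennreal (normal_density (c * \<mu> + e) (\<bar>c\<bar> * \<sigma>) z) * indicator {..<m} z \<partial>lborel)
     = ennreal \<bar>c\<bar> * (\<integral>\<^sup>+y. ennreal (normal_density (c * \<mu> + e) (\<bar>c\<bar> * \<sigma>) (e + c * y)) * indicator {..<m} (e + c*y) \<partial>lborel)"
    by (rule nn_integral_real_affine) (use assms in auto)
  also have "\<dots> = (\<integral>\<^sup>+y. ennreal \<bar>c\<bar> * (ennreal (normal_density (c * \<mu> + e) (\<bar>c\<bar> * \<sigma>) (e + c * y)) * indicator {..<m} (e + c*y)) \<partial>lborel)"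
    by (rule nn_integral_cmult[symmetric]) auto
  also have "\<dots> = (\<integral>\<^sup>+y. ennreal (normal_density \<mu> \<sigma> y) * indicator {y. c*y + e < m} y \<partial>lborel)"
  proof (intro nn_integral_cong)
    fix y
    have "ennreal \<bar>c\<bar> * ennreal (normal_density (c * \<mu> + e) (\<bar>c\<bar> * \<sigma>) (e + c * y)) = ennreal (normal_density \<mu> \<sigma> y)"
      using nd_affine_eq[OF assms, of \<mu> e y] by (simp add: ennreal_mult[symmetric])
    then show "ennreal \<bar>c\<bar> * (ennreal (normal_density (c * \<mu> + e) (\<bar>c\<bar> * \<sigma>) (e + c * y)) * indicator {..<m} (e + c*y))
        = ennreal (normal_density \<mu> \<sigma> y) * indicator {y. c*y + e < m} y"
      by (simp add: indicator_def mult.assoc[symmetric] add.commute)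
  qed
  finally show ?thesis ..
qed

lemma HP:
  assumes "0 < T"
  shows "(\<integral>\<^sup>+z. ennreal (normal_density 0 T z) * indicator {..<m} z \<partial>lborel) = ennreal (Phi (m / T))"
proof -
  have "(\<integral>\<^sup>+z. ennreal (normal_density 0 T z) * indicator {..<m} z \<partial>lborel)
      = (\<integral>\<^sup>+z. ennreal (normal_density (T * 0 + 0) (\<bar>T\<bar> * 1) z) * indicator {..<m} z \<partial>lborel)"
    using assms by simp
  also have "\<dots> = (\<integral>\<^sup>+y. ennreal (std_normal_density y) * indicator {y. T*y + 0 < m} y \<partial>lborel)"
    by (rule G1[symmetric]) (use assms in auto)
  also have "\<dots> = (\<integral>\<^sup>+y. ennreal (std_normal_density y) * indicator {..<m/T} y \<partial>lborel)"
    using assms by (intro nn_integral_cong) (auto simp: indicator_def field_simps)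
  also have "\<dots> = ennreal (Phi (m/T))" by (rule Phi_nn)
  finally show ?thesis .
qed

lemma bvn_factor:
  assumes sx: "sx > 0" and sy: "sy > 0" and r: "-1 < r" "r < 1"
  shows "bvn_density sx sy r (x, y) =
     normal_density 0 sx x * normal_density (r * sy/sx * x) (sy * sqrt (1 - r^2)) y"
proof -
  define k where "k = sqrt (1 - r^2)"
  have rr: "r^2 < 1" using r by (simp add: abs_square_less_1)
  have k: "k > 0" "k^2 = 1 - r^2" using rr unfolding k_def by auto
  have s1: "sqrt (2 * pi * sx\<^sup>2) = sqrt (2*pi) * sx" using sx by (simp add: real_sqrt_mult)
  have s2: "sqrt (2 * pi * (sy * k)\<^sup>2) = sqrt (2*pi) * (sy * k)" using sy k by (simp add: real_sqrt_mult)
  have ex: "- (1 / (2 * (1 - r\<^sup>2))) * (x\<^sup>2 / sx\<^sup>2 - 2 * r * x * y / (sx * sy) + y\<^sup>2 / sy\<^sup>2)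
      = - (x - 0)\<^sup>2 / (2 * sx\<^sup>2) + - (y - r * sy / sx * x)\<^sup>2 / (2 * (sy * k)\<^sup>2)"
  proof -
    have e: "(sy * k)^2 = sy^2 * (1 - r^2)" using k by (simp add: power_mult_distrib)
    have "1 - r^2 > 0" using rr by simp
    then show ?thesis unfolding e using sx sy by (simp add: field_simps power2_eq_square)
  qed
  have "normal_density 0 sx x * normal_density (r * sy/sx * x) (sy * k) y
     = exp (- (x - 0)\<^sup>2 / (2 * sx\<^sup>2) + - (y - r * sy / sx * x)\<^sup>2 / (2 * (sy * k)\<^sup>2)) / (2 * pi * sx * sy * k)"
    unfolding normal_density_def s1 s2 mult_exp_exp[symmetric]
    using sx sy k by (simp add: field_simps)
  also have "\<dots> = bvn_density sx sy r (x, y)"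
    unfolding bvn_density_def fst_conv snd_conv ex k_def[symmetric] by simp
  finally show ?thesis unfolding k_def ..
qed

definition Qf :: "real \<Rightarrow> real \<Rightarrow> real \<Rightarrow> real \<Rightarrow> real \<Rightarrow> real" where
  "Qf sx sy r u1 u2 = sx^2 * u1^2 + 2 * r * sx * sy * u1 * u2 + sy^2 * u2^2"

lemma nd_nn_one: "0 < \<sigma> \<Longrightarrow> (\<integral>\<^sup>+x. ennreal (normal_density \<mu> \<sigma> x) \<partial>lborel) = 1"
  by (subst nn_integral_eq_integral) auto

lemma conv_x:
  assumes "0 < sx" "0 < \<tau>" "\<alpha> \<noteq> 0"
  shows "(\<integral>\<^sup>+x. ennreal (normal_density 0 sx x * normal_density 0 \<tau> (z - \<alpha> * x)) \<partial>lborel)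
        = ennreal (normal_density 0 (sqrt (\<tau>^2 + (\<bar>\<alpha>\<bar> * sx)^2)) z)"
proof -
  have "(\<integral>\<^sup>+x. ennreal (normal_density 0 sx x * normal_density 0 \<tau> (z - \<alpha> * x)) \<partial>lborel)
      = ennreal \<bar>1/\<alpha>\<bar> * (\<integral>\<^sup>+y. ennreal (normal_density 0 sx (0 + 1/\<alpha> * y) * normal_density 0 \<tau> (z - \<alpha> * (0 + 1/\<alpha> * y))) \<partial>lborel)"
    by (rule nn_integral_real_affine) (use assms in auto)
  also have "\<dots> = (\<integral>\<^sup>+y. ennreal \<bar>1/\<alpha>\<bar> * ennreal (normal_density 0 sx (0 + 1/\<alpha> * y) * normal_density 0 \<tau> (z - \<alpha> * (0 + 1/\<alpha> * y))) \<partial>lborel)"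
    by (rule nn_integral_cmult[symmetric]) auto
  also have "\<dots> = (\<integral>\<^sup>+y. ennreal (normal_density 0 \<tau> (z - y) * normal_density 0 (\<bar>\<alpha>\<bar> * sx) y) \<partial>lborel)"
  proof (intro nn_integral_cong)
    fix y
    have "\<bar>\<alpha>\<bar> * normal_density (\<alpha> * 0 + 0) (\<bar>\<alpha>\<bar> * sx) (0 + \<alpha> * (y/\<alpha>)) = normal_density 0 sx (y/\<alpha>)"
      by (rule nd_affine_eq) (use assms in auto)
    then have "\<bar>1/\<alpha>\<bar> * normal_density 0 sx (y/\<alpha>) = normal_density 0 (\<bar>\<alpha>\<bar> * sx) y"
      using assms by (auto simp: field_simps abs_mult)
    then show "ennreal \<bar>1/\<alpha>\<bar> * ennreal (normal_density 0 sx (0 + 1/\<alpha> * y) * normal_density 0 \<tau> (z - \<alpha> * (0 + 1/\<alpha> * y)))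
        = ennreal (normal_density 0 \<tau> (z - y) * normal_density 0 (\<bar>\<alpha>\<bar> * sx) y)"
      using assms by (simp add: ennreal_mult[symmetric] mult.assoc[symmetric])
  qed
  also have "\<dots> = ennreal (normal_density 0 (sqrt (\<tau>^2 + (\<bar>\<alpha>\<bar> * sx)^2)) z)"
    using conv_normal_density_zero_mean[of \<tau> "\<bar>\<alpha>\<bar> * sx"] assms by (simp add: fun_eq_iff)
  finally show ?thesis .
qed

lemma bvn_density_meas[measurable]: "bvn_density sx sy r \<in> borel_measurable borel"
proof -
  have "(\<lambda>z. bvn_density sx sy r z) \<in> borel_measurable (borel \<Otimes>\<^sub>M borel)"
    unfolding bvn_density_def by measurable
  then show ?thesis by (simp add: borel_prod)
qed

lemma halfplane:
  assumes sx: "sx > 0" and sy: "sy > 0" and r: "-1 < r" "r < 1" and u: "u1 \<noteq> 0 \<or> u2 \<noteq> 0"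
  shows "emeasure (bvn sx sy r) {z. u1 * fst z + u2 * snd z < m} = ennreal (Phi (m / sqrt (Qf sx sy r u1 u2)))"
proof -
  define \<beta> where "\<beta> = r * sy / sx"
  define \<sigma>' where "\<sigma>' = sy * sqrt (1 - r^2)"
  have rr: "r^2 < 1" using r by (simp add: abs_square_less_1)
  have \<sigma>': "\<sigma>' > 0" using sy rr by (simp add: \<sigma>'_def)
  have \<sigma>'2: "\<sigma>'^2 = sy^2 * (1 - r^2)" using rr by (simp add: \<sigma>'_def power_mult_distrib)
  define A where "A = {z::real\<times>real. u1 * fst z + u2 * snd z < m}"
  have "open A" unfolding A_def by (intro open_Collect_less continuous_intros)
  then have Am[measurable]: "A \<in> sets borel" by (rule borel_open)
  have "emeasure (bvn sx sy r) A = (\<integral>\<^sup>+z. ennreal (bvn_density sx sy r z) * indicator A z \<partial>lborel)"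
    unfolding bvn_def by (simp add: emeasure_density)
  also have "\<dots> = (\<integral>\<^sup>+z. ennreal (bvn_density sx sy r z) * indicator A z \<partial>(lborel \<Otimes>\<^sub>M lborel))"
    by (simp add: lborel_prod)
  also have "\<dots> = (\<integral>\<^sup>+x. \<integral>\<^sup>+y. ennreal (bvn_density sx sy r (x,y)) * indicator A (x,y) \<partial>lborel \<partial>lborel)"
    by (rule lborel.nn_integral_fst[symmetric]) (unfold lborel_prod, measurable)
  also have "\<dots> = (\<integral>\<^sup>+x. ennreal (normal_density 0 sx x) *
        (\<integral>\<^sup>+y. ennreal (normal_density (\<beta> * x) \<sigma>' y) * indicator {y. u2 * y + u1 * x < m} y \<partial>lborel) \<partial>lborel)"
  proof (intro nn_integral_cong)
    fix x
    have "(\<integral>\<^sup>+y. ennreal (bvn_density sx sy r (x,y)) * indicator A (x,y) \<partial>lborel)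
       = (\<integral>\<^sup>+y. ennreal (normal_density 0 sx x) * (ennreal (normal_density (\<beta> * x) \<sigma>' y) * indicator {y. u2 * y + u1 * x < m} y) \<partial>lborel)"
      by (intro nn_integral_cong)
         (simp add: bvn_factor[OF sx sy r] \<beta>_def \<sigma>'_def ennreal_mult A_def indicator_def mult.assoc add.commute)
    also have "\<dots> = ennreal (normal_density 0 sx x) * (\<integral>\<^sup>+y. ennreal (normal_density (\<beta> * x) \<sigma>' y) * indicator {y. u2 * y + u1 * x < m} y \<partial>lborel)"
      by (rule nn_integral_cmult) auto
    finally show "(\<integral>\<^sup>+y. ennreal (bvn_density sx sy r (x,y)) * indicator A (x,y) \<partial>lborel) = \<dots>" .
  qed
  finally have E: "emeasure (bvn sx sy r) A = \<dots>" .
  show ?thesis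
  proof (cases "u2 = 0")
    case True
    then have u1: "u1 \<noteq> 0" using u by simp
    have Q: "sqrt (Qf sx sy r u1 u2) = \<bar>u1\<bar> * sx"
      using True sx by (simp add: Qf_def power_mult_distrib[symmetric] real_sqrt_abs abs_mult)
    have "emeasure (bvn sx sy r) A = (\<integral>\<^sup>+x. ennreal (normal_density 0 sx x) * indicator {x. u1 * x + 0 < m} x \<partial>lborel)"
      unfolding E
    proof (intro nn_integral_cong)
      fix x
      show "ennreal (normal_density 0 sx x) *
        (\<integral>\<^sup>+y. ennreal (normal_density (\<beta> * x) \<sigma>' y) * indicator {y. u2 * y + u1 * x < m} y \<partial>lborel)
        = ennreal (normal_density 0 sx x) * indicator {x. u1 * x + 0 < m} x"
        using True \<sigma>' by (cases "u1 * x < m") (auto simp: nd_nn_one)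
    qed
    also have "\<dots> = (\<integral>\<^sup>+z. ennreal (normal_density (u1 * 0 + 0) (\<bar>u1\<bar> * sx) z) * indicator {..<m} z \<partial>lborel)"
      by (rule G1) (use sx u1 in auto)
    also have "\<dots> = ennreal (Phi (m / sqrt (Qf sx sy r u1 u2)))"
      unfolding Q using HP[of "\<bar>u1\<bar> * sx" m] sx u1 by simp
    finally show ?thesis unfolding A_def .
  next
    case False
    define \<alpha> where "\<alpha> = u1 + u2 * \<beta>"
    define \<tau> where "\<tau> = \<bar>u2\<bar> * \<sigma>'"
    have \<tau>: "\<tau> > 0" using False \<sigma>' by (simp add: \<tau>_def)
    define T where "T = sqrt (\<tau>^2 + (\<bar>\<alpha>\<bar> * sx)^2)"
    have T: "T = sqrt (Qf sx sy r u1 u2)"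
    proof -
      have "\<tau>^2 + (\<bar>\<alpha>\<bar> * sx)^2 = Qf sx sy r u1 u2"
        unfolding \<tau>_def \<alpha>_def \<beta>_def Qf_def power_mult_distrib \<sigma>'2 power2_abs
        using sx by (simp add: field_simps power2_eq_square)
      then show ?thesis unfolding T_def by simp
    qed
    have T0: "T > 0" unfolding T_def using \<tau> by (simp add: add_pos_nonneg)
    have inner: "(\<integral>\<^sup>+y. ennreal (normal_density (\<beta> * x) \<sigma>' y) * indicator {y. u2 * y + u1 * x < m} y \<partial>lborel)
        = (\<integral>\<^sup>+z. ennreal (normal_density 0 \<tau> (z - \<alpha> * x)) * indicator {..<m} z \<partial>lborel)" for x
    proof -
      have "(\<integral>\<^sup>+y. ennreal (normal_density (\<beta> * x) \<sigma>' y) * indicator {y. u2 * y + u1 * x < m} y \<partial>lborel)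
        = (\<integral>\<^sup>+z. ennreal (normal_density (u2 * (\<beta> * x) + u1 * x) (\<bar>u2\<bar> * \<sigma>') z) * indicator {..<m} z \<partial>lborel)"
        by (rule G1) (use \<sigma>' False in auto)
      also have "\<dots> = (\<integral>\<^sup>+z. ennreal (normal_density 0 \<tau> (z - \<alpha> * x)) * indicator {..<m} z \<partial>lborel)"
        by (intro nn_integral_cong) (simp add: normal_density_def \<tau>_def \<alpha>_def algebra_simps)
      finally show ?thesis .
    qed
    have "emeasure (bvn sx sy r) A = (\<integral>\<^sup>+x. \<integral>\<^sup>+z. ennreal (normal_density 0 sx x * normal_density 0 \<tau> (z - \<alpha> * x)) * indicator {..<m} z \<partial>lborel \<partial>lborel)"
      unfolding E inner
      by (intro nn_integral_cong) (simp add: nn_integral_cmult[symmetric] ennreal_mult mult.assoc)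
    also have "\<dots> = (\<integral>\<^sup>+z. \<integral>\<^sup>+x. ennreal (normal_density 0 sx x * normal_density 0 \<tau> (z - \<alpha> * x)) * indicator {..<m} z \<partial>lborel \<partial>lborel)"
      by (rule lborel_pair.Fubini'[symmetric]) simp
    also have "\<dots> = (\<integral>\<^sup>+z. ennreal (normal_density 0 T z) * indicator {..<m} z \<partial>lborel)"
    proof (intro nn_integral_cong)
      fix z
      have "(\<integral>\<^sup>+x. ennreal (normal_density 0 sx x * normal_density 0 \<tau> (z - \<alpha> * x)) * indicator {..<m} z \<partial>lborel)
          = (\<integral>\<^sup>+x. ennreal (normal_density 0 sx x * normal_density 0 \<tau> (z - \<alpha> * x)) \<partial>lborel) * indicator {..<m} z"
        by (rule nn_integral_multc) simp
      also have "(\<integral>\<^sup>+x. ennreal (normal_density 0 sx x * normal_density 0 \<tau> (z - \<alpha> * x)) \<partial>lborel) = ennreal (normal_density 0 T z)"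
      proof (cases "\<alpha> = 0")
        case True
        have "(\<integral>\<^sup>+x. ennreal (normal_density 0 sx x * normal_density 0 \<tau> (z - \<alpha> * x)) \<partial>lborel)
            = (\<integral>\<^sup>+x. ennreal (normal_density 0 sx x) * ennreal (normal_density 0 \<tau> z) \<partial>lborel)"
          using True by (simp add: ennreal_mult)
        also have "\<dots> = (\<integral>\<^sup>+x. ennreal (normal_density 0 sx x) \<partial>lborel) * ennreal (normal_density 0 \<tau> z)"
          by (rule nn_integral_multc) simp
        also have "\<dots> = ennreal (normal_density 0 T z)"
          using True sx \<tau> by (simp add: nd_nn_one T_def)
        finally show ?thesis .
      next
        case False
        show ?thesis unfolding T_def by (rule conv_x) (use sx \<tau> False in auto)
      qed
      finally show "(\<integral>\<^sup>+x. ennreal (normal_density 0 sx x * normal_density 0 \<tau> (z - \<alpha> * x)) * indicator {..<m} z \<partial>lborel)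
          = ennreal (normal_density 0 T z) * indicator {..<m} z" .
    qed
    also have "\<dots> = ennreal (Phi (m / sqrt (Qf sx sy r u1 u2)))"
      using HP[OF T0] T by simp
    finally show ?thesis unfolding A_def .
  qed
qed

definition Nn :: "real \<times> real \<Rightarrow> real \<times> real \<Rightarrow> real" where
  "Nn a b = ((fst b)^2 + (snd b)^2 - (fst a)^2 - (snd a)^2) / 2"

definition cc :: "real \<Rightarrow> real \<Rightarrow> real \<Rightarrow> real \<times> real \<Rightarrow> real \<times> real \<Rightarrow> real" where
  "cc sx sy r a b = Nn a b / sqrt (Qf sx sy r (fst b - fst a) (snd b - snd a))"

lemma Qf_pos:
  assumes "sx > 0" "sy > 0" "-1 < r" "r < 1" "u1 \<noteq> 0 \<or> u2 \<noteq> 0"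
  shows "Qf sx sy r u1 u2 > 0"
proof -
  have rr: "r^2 < 1" using assms by (simp add: abs_square_less_1)
  have e: "Qf sx sy r u1 u2 = (sx * u1 + r * sy * u2)^2 + (1 - r^2) * (sy * u2)^2"
    unfolding Qf_def by (simp add: power2_eq_square algebra_simps)
  show ?thesis
  proof (cases "u2 = 0")
    case True
    then show ?thesis using assms unfolding e by simp
  next
    case False
    then have "(1 - r^2) * (sy * u2)^2 > 0" using rr assms by simp
    then show ?thesis unfolding e by (simp add: add_nonneg_pos)
  qed
qed

lemma Qf_neg: "Qf sx sy r (-u1) (-u2) = Qf sx sy r u1 u2"
  unfolding Qf_def by simp

lemma K_formula:
  assumes sx: "sx > 0" and sy: "sy > 0" and r: "-1 < r" "r < 1" and ab: "a \<noteq> b"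
  shows "Kpay sx sy r a b = (fst a + snd a) * Phi (cc sx sy r a b) + (fst b + snd b) * Phi (- cc sx sy r a b)"
proof -
  obtain a1 a2 b1 b2 where a: "a = (a1, a2)" and b: "b = (b1, b2)" by fastforce
  define u1 where "u1 = b1 - a1"
  define u2 where "u2 = b2 - a2"
  have u: "u1 \<noteq> 0 \<or> u2 \<noteq> 0" using ab unfolding a b u1_def u2_def by auto
  have c1: "C1 a b = {z. u1 * fst z + u2 * snd z < Nn a b}"
    unfolding C1_def Nn_def a b u1_def u2_def by (auto simp: power2_eq_square algebra_simps)
  have c2: "C2 a b = {z. (-u1) * fst z + (-u2) * snd z < - Nn a b}"
    unfolding C2_def Nn_def a b u1_def u2_def by (auto simp: power2_eq_square field_simps)
  have m1: "measure (bvn sx sy r) (C1 a b) = Phi (cc sx sy r a b)"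
    unfolding measure_def c1 halfplane[OF sx sy r u] cc_def
    by (simp add: Phi_nonneg a b u1_def u2_def)
  have u': "-u1 \<noteq> 0 \<or> -u2 \<noteq> 0" using u by simp
  have m2: "measure (bvn sx sy r) (C2 a b) = Phi (- cc sx sy r a b)"
    unfolding measure_def c2 halfplane[OF sx sy r u'] cc_def Qf_neg
    by (simp add: Phi_nonneg a b u1_def u2_def)
  show ?thesis unfolding Kpay_def using ab m1 m2 by simp
qed

lemma K_sym:
  assumes sx: "sx > 0" and sy: "sy > 0" and r: "-1 < r" "r < 1"
  shows "Kpay sx sy r (- b) (- a) = - Kpay sx sy r a b"
proof (cases "a = b")
  case True
  then show ?thesis unfolding Kpay_def by simp
next
  case False
  then have "-b \<noteq> -a" by simp
  moreover have "cc sx sy r (-b) (-a) = - cc sx sy r a b"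
    unfolding cc_def Nn_def
    by (simp add: Qf_def power2_eq_square algebra_simps minus_divide_left)
  ultimately show ?thesis
    using K_formula[OF sx sy r False] K_formula[OF sx sy r \<open>-b \<noteq> -a\<close>] by (simp add: algebra_simps)
qed

lemma absmul: "\<bar>x\<bar> \<le> a \<Longrightarrow> \<bar>y\<bar> \<le> b \<Longrightarrow> \<bar>x*y::real\<bar> \<le> a*b"
  by (simp add: abs_mult mult_mono')

lemma inv_sqrt_bound:
  fixes y \<epsilon> :: real
  assumes y: "y > 0" "y^2 = 1 + \<epsilon>" and e: "\<bar>\<epsilon>\<bar> \<le> 1/2"
  shows "0 \<le> 1/y - (1 - \<epsilon>/2)" "1/y - (1 - \<epsilon>/2) \<le> 2 * \<epsilon>^2"
proof -
  have y2: "y \<ge> 1/2"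
  proof (rule ccontr)
    assume "\<not> y \<ge> 1/2"
    then have "y^2 < (1/2)^2" using y by (intro power_strict_mono) auto
    then show False using y e by (simp add: abs_le_iff power2_eq_square)
  qed
  have id: "1/y - (1 - \<epsilon>/2) = \<epsilon>^2 * ((y+2) / (2*y*(y+1)^2))"
  proof -
    have e': "\<epsilon> = (y-1)*(y+1)" using y by (simp add: algebra_simps power2_eq_square)
    have pos: "2*y*(y+1)^2 > 0" using y by simp
    have "(1/y - (1 - \<epsilon>/2)) * (2*y*(y+1)^2) = \<epsilon>^2 * (y+2)"
      unfolding e' using y(1) by (simp add: field_simps power2_eq_square)
    then have "1/y - (1 - \<epsilon>/2) = \<epsilon>^2 * (y+2) / (2*y*(y+1)^2)"
      using pos by (metis less_irrefl nonzero_mult_div_cancel_right)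
    then show ?thesis by simp
  qed
  have f0: "0 \<le> (y+2) / (2*y*(y+1)^2)" using y by simp
  have f1: "(y+2) / (2*y*(y+1)^2) \<le> 2"
  proof -
    have "(y+1)^2 \<ge> (3/2)^2" by (rule power_mono) (use y2 in auto)
    then have h: "(y+1)^2 \<ge> 9/4" by (simp add: power_divide)
    have "4*y*(y+1)^2 \<ge> 4*y*(9/4)" by (rule mult_left_mono[OF h]) (use y in auto)
    then have "y + 2 \<le> 2 * (2*y*(y+1)^2)" using y2 by linarith
    then show ?thesis using y by (simp add: divide_le_eq)
  qed
  show "0 \<le> 1/y - (1 - \<epsilon>/2)" unfolding id using f0 by (intro mult_nonneg_nonneg) auto
  show "1/y - (1 - \<epsilon>/2) \<le> 2 * \<epsilon>^2" unfolding id
    using mult_left_mono[OF f1, of "\<epsilon>^2"] by (simp add: mult.commute)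
qed
lemma t1: "\<bar>A*p + C*w + B*q\<bar> \<le> \<bar>A\<bar>*\<bar>p\<bar> + \<bar>C\<bar>*\<bar>w\<bar> + \<bar>B\<bar>*\<bar>q::real\<bar>"
proof -
  have "\<bar>A*p + C*w + B*q\<bar> \<le> \<bar>A*p + C*w\<bar> + \<bar>B*q\<bar>" by (rule abs_triangle_ineq)
  also have "\<dots> \<le> \<bar>A*p\<bar> + \<bar>C*w\<bar> + \<bar>B*q\<bar>" using abs_triangle_ineq[of "A*p" "C*w"] by linarith
  finally show ?thesis by (simp add: abs_mult)
qed
lemma t2: "\<bar>\<epsilon>\<bar> \<le> (x::real) \<Longrightarrow> \<epsilon>^2 \<le> x^2"
  by (metis abs_ge_zero power2_abs power_mono)
lemma t3: assumes ABC: "A + 2*C + B = (1::real)"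
  shows "(A + 4*C + 3*B) * p^2 / 32 + (3*A + 4*C + B) * q^2 / 32 = (p+q)^2/32 + (p^2+q^2)/16 - (p+q)*(A*p + C*(p+q) + B*q)/16"
proof -
  have Aeq: "A = 1 - 2*C - B" using ABC by linarith
  show ?thesis unfolding Aeq by (simp add: field_simps power2_eq_square)
qed
lemma t4: assumes "4 - w \<noteq> (0::real)"
  shows "w/(2*(4-w)) - ((w - r^2/2)*(1 - (-l + Qd/4)/2)/8 + (w - r^2/2)*e2/8) =
    (w^2/32 + r^2/16 - w*l/16) + (w^3/(32*(4-w)) + w*Qd/64 + r^2*l/32 - r^2*Qd/128 - (w - r^2/2)*e2/8)"
  using assms by (simp add: field_simps power2_eq_square power3_eq_cube)

lemma core:
  fixes A B C :: real
  assumes ABC: "A + 2*C + B = 1" and P1: "A + 4*C + 3*B > 0" and P2: "3*A + 4*C + B > 0"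
  shows "\<exists>\<delta>>0. \<exists>\<kappa>>0. \<exists>M. \<forall>p q y R. p^2 + q^2 < \<delta>^2 \<longrightarrow> y > 0 \<longrightarrow>
     y^2 = 1 - (A*p + C*(p+q) + B*q) + (A*p^2 + 2*C*p*q + B*q^2)/4 \<longrightarrow>
     \<bar>R\<bar> \<le> 2 * \<bar>(p + q - (p^2+q^2)/2) / (8*y)\<bar>^3 \<longrightarrow>
     \<kappa> * (p^2+q^2) \<le> (p+q)/(2*(4-(p+q))) - (p + q - (p^2+q^2)/2)/(8*y) - R \<and>
     (p+q)/(2*(4-(p+q))) - (p + q - (p^2+q^2)/2)/(8*y) - R \<le> M * (p^2+q^2)"
proof -
  define \<Lambda> where "\<Lambda> = \<bar>A\<bar> + \<bar>B\<bar> + \<bar>C\<bar>"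
  have \<Lambda>0: "\<Lambda> \<ge> 0" unfolding \<Lambda>_def by simp
  define Cr where "Cr = 2 + \<Lambda> + 7*\<Lambda>^2"
  have Cr0: "Cr > 0" unfolding Cr_def using \<Lambda>0 by (simp add: add_pos_nonneg)
  define m where "m = min (A + 4*C + 3*B) (3*A + 4*C + B)"
  define Mx where "Mx = max (A + 4*C + 3*B) (3*A + 4*C + B)"
  have m0: "m > 0" unfolding m_def using P1 P2 by simp
  define \<delta> where "\<delta> = min 1 (min (1/(6*\<Lambda>+6)) (m/(64*Cr)))"
  have \<delta>0: "\<delta> > 0" unfolding \<delta>_def using m0 Cr0 \<Lambda>0 by simp
  have \<delta>1: "\<delta> \<le> 1" "\<delta> \<le> 1/(6*\<Lambda>+6)" "\<delta> \<le> m/(64*Cr)" unfolding \<delta>_def by auto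
  show ?thesis
  proof (rule exI[of _ \<delta>], rule conjI[OF \<delta>0], rule exI[of _ "m/64"], rule conjI, use m0 in simp,
      rule exI[of _ "Mx/32 + Cr"], intro allI impI conjI)
    fix p q y R
    assume pq: "p^2 + q^2 < \<delta>^2" and y0: "y > 0"
      and yeq: "y^2 = 1 - (A*p + C*(p+q) + B*q) + (A*p^2 + 2*C*p*q + B*q^2)/4"
      and Rb: "\<bar>R\<bar> \<le> 2 * \<bar>(p + q - (p^2+q^2)/2) / (8*y)\<bar>^3"
    define r where "r = sqrt (p^2 + q^2)"
    have r0: "r \<ge> 0" unfolding r_def by simp
    have r2: "r^2 = p^2 + q^2" unfolding r_def by simp
    have rd: "r < \<delta>" unfolding r_def using real_sqrt_less_mono[OF pq] \<delta>0 by simp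
    have r1: "r \<le> 1" using rd \<delta>1 by simp
    have rL: "r * (6*\<Lambda>+6) \<le> 1"
    proof -
      have "r * (6*\<Lambda>+6) \<le> \<delta> * (6*\<Lambda>+6)" using rd \<Lambda>0 by (intro mult_right_mono) auto
      moreover have "\<delta> * (6*\<Lambda>+6) \<le> 1" using \<delta>1(2) \<Lambda>0 by (simp add: le_divide_eq)
      ultimately show ?thesis by linarith
    qed
    have rm: "r * (64*Cr) \<le> m"
    proof -
      have "r * (64*Cr) \<le> \<delta> * (64*Cr)" using rd Cr0 by (intro mult_right_mono) auto
      moreover have "\<delta> * (64*Cr) \<le> m" using \<delta>1(3) Cr0 by (simp add: le_divide_eq)
      ultimately show ?thesis by linarith
    qed
    have pr: "\<bar>p\<bar> \<le> r" unfolding r_def by (rule real_sqrt_le_mono[of "p^2", simplified]) simp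
    have qr: "\<bar>q\<bar> \<le> r" unfolding r_def by (rule real_sqrt_le_mono[of "q^2", simplified]) simp
    define w where "w = p + q"
    have wr: "\<bar>w\<bar> \<le> 2*r" unfolding w_def using pr qr by simp
    define l where "l = A*p + C*w + B*q"
    have lr: "\<bar>l\<bar> \<le> 2*\<Lambda>*r"
    proof -
      have "\<bar>l\<bar> \<le> \<bar>A\<bar>*\<bar>p\<bar> + \<bar>C\<bar>*\<bar>w\<bar> + \<bar>B\<bar>*\<bar>q\<bar>"
        unfolding l_def by (rule t1)
      also have "\<dots> \<le> \<bar>A\<bar>*r + \<bar>C\<bar>*(2*r) + \<bar>B\<bar>*r"
        by (intro add_mono mult_left_mono pr qr wr) auto
      also have "\<dots> \<le> 2*\<Lambda>*r" unfolding \<Lambda>_def using r0 by (simp add: algebra_simps)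
      finally show ?thesis .
    qed
    define Qd where "Qd = A*p^2 + 2*C*p*q + B*q^2"
    have Qr: "\<bar>Qd\<bar> \<le> \<Lambda>*r^2"
    proof -
      have pq2: "2*\<bar>p*q\<bar> \<le> r^2" unfolding r2
        using sum_squares_bound[of "\<bar>p\<bar>" "\<bar>q\<bar>"] by (simp add: abs_mult power2_abs)
      have "\<bar>Qd\<bar> \<le> \<bar>A\<bar>*p^2 + \<bar>C\<bar>*(2*\<bar>p*q\<bar>) + \<bar>B\<bar>*q^2"
        unfolding Qd_def by (simp add: abs_mult order_trans[OF abs_triangle_ineq] add_mono)
      also have "\<dots> \<le> \<bar>A\<bar>*r^2 + \<bar>C\<bar>*r^2 + \<bar>B\<bar>*r^2"
        by (intro add_mono mult_left_mono pq2) (auto simp: r2)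
      also have "\<dots> = \<Lambda>*r^2" unfolding \<Lambda>_def by (simp add: algebra_simps)
      finally show ?thesis .
    qed
    define \<epsilon> where "\<epsilon> = -l + Qd/4"
    have yeq': "y^2 = 1 + \<epsilon>" unfolding \<epsilon>_def l_def Qd_def w_def yeq by simp
    have er: "\<bar>\<epsilon>\<bar> \<le> 3*\<Lambda>*r"
    proof -
      have h1: "\<bar>\<epsilon>\<bar> \<le> \<bar>l\<bar> + \<bar>Qd\<bar>/4" unfolding \<epsilon>_def by simp
      have h3: "\<Lambda>*r^2 \<le> \<Lambda>*r" using r0 r1 \<Lambda>0 by (simp add: mult_left_mono power2_eq_square mult_left_le)
      have h4: "\<Lambda>*r \<ge> 0" using \<Lambda>0 r0 by simp
      show ?thesis using h1 h3 h4 lr Qr by linarith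
    qed
    have ehalf: "\<bar>\<epsilon>\<bar> \<le> 1/2"
    proof -
      have "3*\<Lambda>*r \<le> 1/2" using rL r0 by (simp add: algebra_simps)
      then show ?thesis using er by simp
    qed
    have yhalf: "y \<ge> 1/2"
    proof (rule ccontr)
      assume "\<not> y \<ge> 1/2"
      then have "y^2 < (1/2)^2" using y0 by (intro power_strict_mono) auto
      then show False using yeq' ehalf by (simp add: abs_le_iff power2_eq_square)
    qed
    define e2 where "e2 = 1/y - (1 - \<epsilon>/2)"
    have e2b: "0 \<le> e2" "e2 \<le> 2*\<epsilon>^2" unfolding e2_def using inv_sqrt_bound[OF y0 yeq' ehalf] by auto
    have e2r: "\<bar>e2\<bar> \<le> 18*\<Lambda>^2*r^2"
    proof -
      have "\<epsilon>^2 \<le> (3*\<Lambda>*r)^2" using er by (rule t2)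
      then show ?thesis using e2b by (simp add: power_mult_distrib)
    qed
    define n where "n = w - r^2/2"
    have nr: "\<bar>n\<bar> \<le> 3*r"
    proof -
      have "r^2 \<le> r" using r0 r1 by (simp add: power2_eq_square mult_left_le)
      moreover have "r^2 \<ge> 0" by simp
      ultimately show ?thesis unfolding n_def abs_le_iff using wr[unfolded abs_le_iff] r0 by linarith
    qed
    have w4: "4 - w \<ge> 2" using wr r1 by simp
    define quad where "quad = (A + 4*C + 3*B) * p^2 / 32 + (3*A + 4*C + B) * q^2 / 32"
    define rem where "rem = w^3/(32*(4-w)) + w*Qd/64 + r^2*l/32 - r^2*Qd/128 - n*e2/8"
    have J: "w/(2*(4-w)) - n/(8*y) = quad + rem"
    proof -
      have ny: "n/(8*y) = n*(1 - \<epsilon>/2)/8 + n*e2/8" unfolding e2_def by (simp add: field_simps)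
      have q: "quad = w^2/32 + r^2/16 - w*l/16"
        unfolding quad_def w_def l_def r2 by (rule t3[OF ABC])
      have w0: "4 - w \<noteq> 0" using w4 by simp
      have "w/(2*(4-w)) - n/(8*y) = w/(2*(4-w)) - (n*(1 - \<epsilon>/2)/8 + n*e2/8)" using ny by simp
      also have "\<dots> = quad + rem" unfolding q rem_def n_def \<epsilon>_def by (rule t4[OF w0])
      finally show ?thesis .
    qed
    have remb: "\<bar>rem\<bar> + \<bar>R\<bar> \<le> Cr * r^3"
    proof -
      have r3: "r^3 \<le> r^2" "r^4 \<le> r^3" using r0 r1 by (simp_all add: power_decreasing)
      have t1: "\<bar>w^3/(32*(4-w))\<bar> \<le> r^3/8"
      proof -
        have "\<bar>w\<bar>^3 \<le> (2*r)^3" by (rule power_mono[OF wr]) simp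
        moreover have "\<bar>w^3/(32*(4-w))\<bar> = \<bar>w\<bar>^3 / (32*(4-w))" using w4 by (simp add: abs_mult power_abs)
        moreover have "\<bar>w\<bar>^3 / (32*(4-w)) \<le> \<bar>w\<bar>^3 / 64" using w4 by (intro divide_left_mono) auto
        ultimately show ?thesis by simp
      qed
      have t2: "\<bar>w*Qd/64\<bar> \<le> \<Lambda>*r^3/32"
        using absmul[OF wr Qr] by (simp add: power3_eq_cube power2_eq_square algebra_simps)
      have t3: "\<bar>r^2*l/32\<bar> \<le> \<Lambda>*r^3/16"
        using absmul[of "r^2" "r^2" l, OF _ lr] by (simp add: power3_eq_cube power2_eq_square algebra_simps)
      have t4: "\<bar>r^2*Qd/128\<bar> \<le> \<Lambda>*r^3/128"
      proof -
        have "\<bar>r^2*Qd\<bar> \<le> r^2 * (\<Lambda>*r^2)" using absmul[of "r^2" "r^2" Qd, OF _ Qr] by simp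
        also have "\<dots> = \<Lambda>*r^4" by (simp add: power2_eq_square power4_eq_xxxx)
        also have "\<dots> \<le> \<Lambda>*r^3" using r3 \<Lambda>0 by (simp add: mult_left_mono)
        finally show ?thesis by simp
      qed
      have t5: "\<bar>n*e2/8\<bar> \<le> 7*\<Lambda>^2*r^3"
      proof -
        have "\<bar>n*e2\<bar> \<le> (3*r)*(18*\<Lambda>^2*r^2)" by (rule absmul[OF nr e2r])
        also have "\<dots> = 54*\<Lambda>^2*r^3" by (simp add: power3_eq_cube power2_eq_square)
        finally show ?thesis using \<Lambda>0 r0 by simp
      qed
      have t6: "\<bar>R\<bar> \<le> r^3"
      proof -
        have "\<bar>(p + q - (p^2+q^2)/2) / (8*y)\<bar> = \<bar>n\<bar> / (8*y)" unfolding n_def w_def r2 using y0 by simp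
        also have "\<dots> \<le> (3*r) / 4"
          using nr yhalf y0 by (intro frac_le) auto
        finally have "\<bar>(p + q - (p^2+q^2)/2) / (8*y)\<bar>^3 \<le> ((3*r)/4)^3" by (intro power_mono) auto
        moreover have "((3*r)/4)^3 = 27/64*r^3" by (simp add: power_divide power_mult_distrib)
        moreover have "r^3 \<ge> 0" using r0 by simp
        ultimately show ?thesis using Rb by linarith
      qed
      have "\<bar>rem\<bar> \<le> \<bar>w^3/(32*(4-w))\<bar> + \<bar>w*Qd/64\<bar> + \<bar>r^2*l/32\<bar> + \<bar>r^2*Qd/128\<bar> + \<bar>n*e2/8\<bar>"
        unfolding rem_def by linarith
      also have "\<dots> \<le> r^3/8 + \<Lambda>*r^3/32 + \<Lambda>*r^3/16 + \<Lambda>*r^3/128 + 7*\<Lambda>^2*r^3"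
        using t1 t2 t3 t4 t5 by linarith
      finally have "\<bar>rem\<bar> + \<bar>R\<bar> \<le> r^3/8 + \<Lambda>*r^3/32 + \<Lambda>*r^3/16 + \<Lambda>*r^3/128 + 7*\<Lambda>^2*r^3 + r^3"
        using t6 by linarith
      also have "\<dots> \<le> Cr * r^3"
      proof -
        have e: "Cr * r^3 - (r^3/8 + \<Lambda>*r^3/32 + \<Lambda>*r^3/16 + \<Lambda>*r^3/128 + 7*\<Lambda>^2*r^3 + r^3) = 7/8*r^3 + 115/128*(\<Lambda>*r^3)"
          unfolding Cr_def by (simp add: algebra_simps)
        have "r^3 \<ge> 0" "\<Lambda>*r^3 \<ge> 0" using r0 \<Lambda>0 by auto
        then show ?thesis using e by linarith
      qed
      finally show ?thesis .
    qed
    have quadb: "m * r^2 / 32 \<le> quad" "quad \<le> Mx * r^2 / 32"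
    proof -
      have "m * p^2 \<le> (A + 4*C + 3*B) * p^2" "m * q^2 \<le> (3*A + 4*C + B) * q^2"
        unfolding m_def by (auto intro!: mult_right_mono)
      moreover have "m * r^2 / 32 = m*p^2/32 + m*q^2/32" unfolding r2 by (simp add: algebra_simps)
      ultimately show "m * r^2 / 32 \<le> quad" unfolding quad_def by linarith
      have "(A + 4*C + 3*B) * p^2 \<le> Mx * p^2" "(3*A + 4*C + B) * q^2 \<le> Mx * q^2"
        unfolding Mx_def by (auto intro!: mult_right_mono)
      moreover have "Mx * r^2 / 32 = Mx*p^2/32 + Mx*q^2/32" unfolding r2 by (simp add: algebra_simps)
      ultimately show "quad \<le> Mx * r^2 / 32" unfolding quad_def by linarith
    qed
    have cube: "Cr * r^3 \<le> m * r^2 / 64"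
    proof -
      have "Cr * r^3 = (r * (64*Cr)) * r^2 / 64" by (simp add: power3_eq_cube power2_eq_square)
      also have "\<dots> \<le> m * r^2 / 64" using rm by (intro divide_right_mono mult_right_mono) auto
      finally show ?thesis .
    qed
    have cube2: "Cr * r^3 \<le> Cr * r^2" using Cr0 r0 r1 by (simp add: power_decreasing)
    have eqJ: "(p+q)/(2*(4-(p+q))) - (p + q - (p^2+q^2)/2)/(8*y) - R = quad + rem - R"
      using J unfolding w_def n_def r2 by simp
    show "m/64 * (p^2+q^2) \<le> (p+q)/(2*(4-(p+q))) - (p + q - (p^2+q^2)/2)/(8*y) - R"
    proof -
      have "m/64*(p^2+q^2) = m*r^2/64" unfolding r2 by simp
      moreover have "-\<bar>rem\<bar> \<le> rem" "R \<le> \<bar>R\<bar>" by auto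
      ultimately show ?thesis unfolding eqJ using quadb remb cube by linarith
    qed
    show "(p+q)/(2*(4-(p+q))) - (p + q - (p^2+q^2)/2)/(8*y) - R \<le> (Mx/32 + Cr) * (p^2+q^2)"
    proof -
      have "(Mx/32 + Cr) * (p^2+q^2) = Mx*r^2/32 + Cr*r^2" unfolding r2 by (simp add: algebra_simps)
      moreover have "rem \<le> \<bar>rem\<bar>" "-R \<le> \<bar>R\<bar>" by auto
      ultimately show ?thesis unfolding eqJ using quadb remb cube2 by linarith
    qed
  qed
qed

lemma deriv0:
  fixes f :: "real \<Rightarrow> real"
  assumes d: "\<delta> > 0" and b: "\<And>t. \<bar>t - t0\<bar> < \<delta> \<Longrightarrow> \<bar>f t - f t0\<bar> \<le> C * (t - t0)^2"
  shows "(f has_real_derivative 0) (at t0)"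
proof -
  have "((\<lambda>y. (f y - f t0) / (y - t0)) \<longlongrightarrow> 0) (at t0)"
  proof (rule Lim_null_comparison)
    show "\<forall>\<^sub>F y in at t0. norm ((f y - f t0) / (y - t0)) \<le> \<bar>C\<bar> * \<bar>y - t0\<bar>"
      unfolding eventually_at
    proof (intro exI[of _ \<delta>] conjI d ballI impI)
      fix y assume "y \<in> UNIV" "y \<noteq> t0 \<and> dist y t0 < \<delta>"
      then have y: "y \<noteq> t0" "\<bar>y - t0\<bar> < \<delta>" by (auto simp: dist_real_def)
      have "\<bar>f y - f t0\<bar> \<le> \<bar>C\<bar> * \<bar>y - t0\<bar> * \<bar>y - t0\<bar>"
      proof -
        have h1: "\<bar>f y - f t0\<bar> \<le> C*(y-t0)^2" by (rule b[OF y(2)])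
        have h2: "C * (y - t0)^2 \<le> \<bar>C\<bar> * (y - t0)^2" by (intro mult_right_mono) auto
        have h3: "(y - t0)^2 = \<bar>y - t0\<bar> * \<bar>y - t0\<bar>" by (simp add: power2_eq_square abs_mult_self_eq)
        have "\<bar>f y - f t0\<bar> \<le> \<bar>C\<bar>*(y-t0)^2" using h1 h2 by linarith
        then show ?thesis unfolding h3 by (simp add: mult.assoc)
      qed
      then show "norm ((f y - f t0) / (y - t0)) \<le> \<bar>C\<bar> * \<bar>y - t0\<bar>"
        using y by (simp add: abs_divide divide_le_eq)
    qed
    show "((\<lambda>y. \<bar>C\<bar> * \<bar>y - t0\<bar>) \<longlongrightarrow> 0) (at t0)"
    proof -
      have "((\<lambda>y. \<bar>C\<bar> * \<bar>y - t0\<bar>) \<longlongrightarrow> \<bar>C\<bar> * \<bar>t0 - t0\<bar>) (at t0)" by (intro tendsto_intros)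
      then show ?thesis by simp
    qed
  qed
  then show ?thesis by (simp add: has_field_derivative_iff)
qed

lemma Qf_scale: "Qf sx sy r (s*u1) (s*u2) = s^2 * Qf sx sy r u1 u2"
  unfolding Qf_def by (simp add: power_mult_distrib algebra_simps power2_eq_square)

lemma Kmin:
  assumes sx: "sx > 0" and sy: "sy > 0" and r: "-1 < r" "r < 1"
    and P1': "sx^2 + 4*r* sx* sy + 3* sy^2 > 0" and P2': "3* sx^2 + 4*r* sx* sy + sy^2 > 0"
  defines "s \<equiv> xstar sx sy r"
  shows "\<exists>\<delta>>0. \<exists>Cb. \<forall>p q. p^2 + q^2 < \<delta>^2 \<longrightarrow>
     ((p, q) \<noteq> (0, 0) \<longrightarrow> 0 < Kpay sx sy r (-s+p, -s+q) (s,s)) \<and>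
     \<bar>Kpay sx sy r (-s+p, -s+q) (s,s)\<bar> \<le> Cb * (p^2+q^2)"
proof -
  define V where "V = sx^2 + 2*r* sx* sy + sy^2"
  have VQ: "V = Qf sx sy r 1 1" unfolding V_def Qf_def by simp
  have V0: "V > 0" unfolding VQ by (rule Qf_pos[OF sx sy r]) simp
  have s_def': "s = sqrt (2*pi) * sqrt V / 4"
    unfolding s_def xstar_def V_def by (simp add: real_sqrt_mult mult.assoc)
  have s0: "s > 0" unfolding s_def' using V0 by simp
  define A' where "A' = sx^2 / V"
  define B' where "B' = sy^2 / V"
  define C' where "C' = r* sx* sy / V"
  have ABC: "A' + 2*C' + B' = 1"
  proof -
    have "A' + 2*C' + B' = (sx^2 + 2*r* sx* sy + sy^2) / V" using V0 unfolding A'_def B'_def C'_def by (simp add: field_simps)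
    then show ?thesis using V0 unfolding V_def by simp
  qed
  have P1: "A' + 4*C' + 3*B' > 0"
  proof -
    have "A' + 4*C' + 3*B' = (sx^2 + 4*r* sx* sy + 3* sy^2) / V" using V0 unfolding A'_def B'_def C'_def by (simp add: field_simps)
    then show ?thesis using V0 P1' by simp
  qed
  have P2: "3*A' + 4*C' + B' > 0"
  proof -
    have "3*A' + 4*C' + B' = (3* sx^2 + 4*r* sx* sy + sy^2) / V" using V0 unfolding A'_def B'_def C'_def by (simp add: field_simps)
    then show ?thesis using V0 P2' by simp
  qed
  obtain \<delta>0 \<kappa> M where \<delta>0: "\<delta>0 > 0" and \<kappa>: "\<kappa> > 0" and core: "\<And>p q y R. p^2 + q^2 < \<delta>0^2 \<Longrightarrow> y > 0 \<Longrightarrow>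
     y^2 = 1 - (A'*p + C'*(p+q) + B'*q) + (A'*p^2 + 2*C'*p*q + B'*q^2)/4 \<Longrightarrow>
     \<bar>R\<bar> \<le> 2 * \<bar>(p + q - (p^2+q^2)/2) / (8*y)\<bar>^3 \<Longrightarrow>
     \<kappa> * (p^2+q^2) \<le> (p+q)/(2*(4-(p+q))) - (p + q - (p^2+q^2)/2)/(8*y) - R \<and>
     (p+q)/(2*(4-(p+q))) - (p + q - (p^2+q^2)/2)/(8*y) - R \<le> M * (p^2+q^2)"
    using core[OF ABC P1 P2] by metis
  define \<delta> where "\<delta> = s * min \<delta>0 1"
  show ?thesis
  proof (rule exI[of _ \<delta>], rule conjI, use s0 \<delta>0 in \<open>simp add: \<delta>_def\<close>, rule exI[of _ "6 * \<bar>M\<bar> / s"], intro allI impI)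
    fix p q :: real
    assume pq: "p^2 + q^2 < \<delta>^2"
    define p' where "p' = p / s"
    define q' where "q' = q / s"
    have pp: "p = s * p'" "q = s * q'" unfolding p'_def q'_def using s0 by auto
    have r'2: "p'^2 + q'^2 = (p^2+q^2) / s^2" unfolding p'_def q'_def by (simp add: power_divide add_divide_distrib)
    have pq': "p'^2 + q'^2 < (min \<delta>0 1)^2"
      unfolding r'2 using pq s0 by (simp add: \<delta>_def power_mult_distrib divide_less_eq mult.commute)
    have pq0: "p'^2 + q'^2 < \<delta>0^2" "p'^2 + q'^2 < 1"
    proof -
      have "(min \<delta>0 1)^2 \<le> \<delta>0^2" by (rule power_mono) (use \<delta>0 in auto)
      moreover have "(min \<delta>0 1)^2 \<le> 1^2" by (rule power_mono) (use \<delta>0 in auto)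
      ultimately show "p'^2 + q'^2 < \<delta>0^2" "p'^2 + q'^2 < 1" using pq' by auto
    qed
    have p'1: "\<bar>p'\<bar> < 1" "\<bar>q'\<bar> < 1"
    proof -
      have "p'^2 < 1" "q'^2 < 1" using pq0(2) by (smt (verit) zero_le_power2)+
      then show "\<bar>p'\<bar> < 1" "\<bar>q'\<bar> < 1" by (simp_all add: abs_square_less_1)
    qed
    define a where "a = (-s+p, -s+q)"
    have ab: "a \<noteq> (s, s)" unfolding a_def pp using p'1 s0 by auto
    have Kf: "Kpay sx sy r a (s,s) = (fst a + snd a) * Phi (cc sx sy r a (s,s)) + (s + s) * Phi (- cc sx sy r a (s,s))"
      using K_formula[OF sx sy r ab] by simp
    define c where "c = cc sx sy r a (s,s)"
    define w' where "w' = p' + q'"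
    define n' where "n' = p' + q' - (p'^2+q'^2)/2"
    define Qy where "Qy = Qf sx sy r (2 - p') (2 - q')"
    have Qy0: "Qy > 0" unfolding Qy_def by (rule Qf_pos[OF sx sy r]) (use p'1 in auto)
    define y where "y = sqrt Qy / (2 * sqrt V)"
    have y0: "y > 0" unfolding y_def using Qy0 V0 by simp
    have yeq: "y^2 = 1 - (A'*p' + C'*(p'+q') + B'*q') + (A'*p'^2 + 2*C'*p'*q' + B'*q'^2)/4"
    proof -
      have "y^2 = Qy / (4 * V)" unfolding y_def using Qy0 V0 by (simp add: power_divide power_mult_distrib)
      also have "\<dots> = 1 - (A'*p' + C'*(p'+q') + B'*q') + (A'*p'^2 + 2*C'*p'*q' + B'*q'^2)/4"
      proof -
        have Qe: "Qy = 4*V - 4*(sx^2*p' + r* sx* sy*(p'+q') + sy^2*q') + (sx^2*p'^2 + 2*(r* sx* sy)*p'*q' + sy^2*q'^2)"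
          unfolding Qy_def Qf_def V_def by (simp add: power2_eq_square algebra_simps)
        have l: "A'*p' + C'*(p'+q') + B'*q' = (sx^2*p' + r* sx* sy*(p'+q') + sy^2*q')/V"
          using V0 by (simp add: A'_def B'_def C'_def field_simps)
        have qd: "A'*p'^2 + 2*C'*p'*q' + B'*q'^2 = (sx^2*p'^2 + 2*(r* sx* sy)*p'*q' + sy^2*q'^2)/V"
          using V0 by (simp add: A'_def B'_def C'_def field_simps)
        show ?thesis unfolding Qe l qd using V0 by (simp add: field_simps)
      qed
      finally show ?thesis .
    qed
    have phic: "phi0 * c = n' / (8*y)"
    proof -
      have N: "Nn a (s,s) = s^2 * n'" unfolding Nn_def a_def n'_def pp by (simp add: power2_eq_square field_simps)
      have Q: "Qf sx sy r (fst (s,s) - fst a) (snd (s,s) - snd a) = s^2 * Qy"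
        unfolding a_def Qy_def pp using Qf_scale[of sx sy r s "2 - p'" "2 - q'"] by (simp add: algebra_simps)
      have sq: "sqrt (s^2 * Qy) = s * (2 * sqrt V * y)" unfolding y_def using s0 V0 by (simp add: real_sqrt_mult)
      have "c = s^2 * n' / (s * (2 * sqrt V * y))" unfolding c_def cc_def N Q sq ..
      also have "\<dots> = s * n' / (2 * sqrt V * y)" using s0 by (simp add: power2_eq_square)
      finally have "phi0 * c = (sqrt (2*pi) * sqrt V / 4) * n' / (2 * sqrt V * y) / sqrt (2*pi)"
        unfolding phi0_def s_def' by simp
      also have "\<dots> = n' / (8*y)" using V0 by (simp add: field_simps)
      finally show ?thesis .
    qed
    define R0 where "R0 = Phi c - 1/2 - phi0 * c"
    have R0b: "\<bar>R0\<bar> \<le> 2 * \<bar>(p' + q' - (p'^2+q'^2)/2) / (8*y)\<bar>^3"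
      using Phi_bound[of c] phi0_cube[of c] unfolding R0_def phic[unfolded n'_def, symmetric] by linarith
    define X where "X = (p'+q')/(2*(4-(p'+q'))) - (p' + q' - (p'^2+q'^2)/2)/(8*y) - R0"
    have Xb: "\<kappa> * (p'^2+q'^2) \<le> X" "X \<le> M * (p'^2+q'^2)"
      using core[OF pq0(1) y0 yeq R0b] unfolding X_def by auto
    define L where "L = s * (4 - w')"
    have L0: "L > 0" "L \<le> 6 * s" unfolding L_def w'_def using s0 p'1 by (auto simp: abs_less_iff)
    have KX: "Kpay sx sy r a (s,s) = L * X"
    proof -
      have "Kpay sx sy r a (s,s) = (-2* s + s*w') * Phi c + 2* s * (1 - Phi c)"
      proof -
        have fa: "fst a + snd a = -2* s + s*w'" unfolding a_def pp w'_def by (simp add: algebra_simps)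
        show ?thesis using Kf unfolding c_def[symmetric] Phi_minus fa by simp
      qed
      also have "\<dots> = L * X"
        unfolding X_def R0_def phic[unfolded n'_def, symmetric] L_def w'_def
        using s0 p'1 by (simp add: field_simps abs_less_iff)
      finally show ?thesis .
    qed
    have pos: "(p, q) \<noteq> (0, 0) \<longrightarrow> 0 < Kpay sx sy r a (s,s)"
    proof
      assume "(p, q) \<noteq> (0, 0)"
      then have "p'^2 + q'^2 > 0" unfolding pp using s0 by (auto simp: add_pos_nonneg add_nonneg_pos)
      then have "X > 0" using Xb \<kappa> by (smt (verit) mult_pos_pos)
      then show "0 < Kpay sx sy r a (s,s)" unfolding KX using L0 by simp
    qed
    have bnd: "\<bar>Kpay sx sy r a (s,s)\<bar> \<le> 6 * \<bar>M\<bar> / s * (p^2 + q^2)"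
    proof -
      have X0: "X \<ge> 0" using Xb \<kappa> by (smt (verit) mult_nonneg_nonneg zero_le_power2)
      have "\<bar>Kpay sx sy r a (s,s)\<bar> = L * X" unfolding KX using L0 X0 by simp
      also have "\<dots> \<le> (6 * s) * (\<bar>M\<bar> * (p'^2+q'^2))"
        using Xb L0 X0 by (intro mult_mono) (auto intro: order_trans[OF _ mult_right_mono[OF abs_ge_self]])
      also have "\<dots> = 6 * \<bar>M\<bar> / s * (p^2 + q^2)" unfolding r'2 using s0 by (simp add: power2_eq_square field_simps)
      finally show ?thesis .
    qed
    show "((p, q) \<noteq> (0, 0) \<longrightarrow> 0 < Kpay sx sy r (-s+p, -s+q) (s,s)) \<and>
     \<bar>Kpay sx sy r (-s+p, -s+q) (s,s)\<bar> \<le> 6 * \<bar>M\<bar> / s * (p^2+q^2)"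
      using pos bnd unfolding a_def by simp
  qed
qed

theorem mainTheorem7:
  fixes sx sy r :: real
  assumes "sx > 0" and "sy > 0" and "-1 < r" and "r < 1"
    and "r > max (- (sx^2 + 3 * sy^2) / (4 * sx * sy)) (- (3 * sx^2 + sy^2) / (4 * sx * sy))"
  defines "K \<equiv> Kpay sx sy r"
      and "s \<equiv> xstar sx sy r"
  shows "((\<lambda>t. K (t, -s) (s, s)) has_real_derivative 0) (at (-s))
       \<and> ((\<lambda>t. K (-s, t) (s, s)) has_real_derivative 0) (at (-s))
       \<and> ((\<lambda>t. K (-s, -s) (t, s)) has_real_derivative 0) (at s)
       \<and> ((\<lambda>t. K (-s, -s) (s, t)) has_real_derivative 0) (at s)
       \<and> (\<exists>e>0. \<forall>a. a \<noteq> (-s, -s) \<and> dist a (-s, -s) < e \<longrightarrow> K (-s, -s) (s, s) < K a (s, s))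
       \<and> (\<exists>e>0. \<forall>b. b \<noteq> (s, s) \<and> dist b (s, s) < e \<longrightarrow> K (-s, -s) b < K (-s, -s) (s, s))"
proof -
  note sx = assms(1) and sy = assms(2) and r = assms(3,4)
  have sxy: "4 * sx * sy > 0" using sx sy by simp
  have P1': "sx^2 + 4 * r * sx * sy + 3 * sy^2 > 0"
  proof -
    have "- (sx^2 + 3 * sy^2) / (4 * sx * sy) < r" using assms(5) by simp
    then have "- (sx^2 + 3 * sy^2) < r * (4 * sx * sy)" using sxy by (simp add: divide_less_eq)
    then show ?thesis by (simp add: algebra_simps)
  qed
  have P2': "3 * sx^2 + 4 * r * sx * sy + sy^2 > 0"
  proof -
    have "- (3 * sx^2 + sy^2) / (4 * sx * sy) < r" using assms(5) by simp
    then have "- (3 * sx^2 + sy^2) < r * (4 * sx * sy)" using sxy by (simp add: divide_less_eq)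
    then show ?thesis by (simp add: algebra_simps)
  qed
  obtain \<delta> Cb where \<delta>: "\<delta> > 0" and Kb: "\<And>p q. p^2 + q^2 < \<delta>^2 \<Longrightarrow>
     ((p, q) \<noteq> (0, 0) \<longrightarrow> 0 < K (-s+p, -s+q) (s,s)) \<and> \<bar>K (-s+p, -s+q) (s,s)\<bar> \<le> Cb * (p^2+q^2)"
    using Kmin[OF sx sy r P1' P2'] unfolding K_def s_def by metis
  have K00: "K (-s, -s) (s, s) = 0" using Kb[of 0 0] \<delta> by simp
  have sym: "K (-s, -s) (b1, b2) = - K (- b1, - b2) (s, s)" for b1 b2
    using K_sym[OF sx sy r, of "(b1, b2)" "(-s,-s)"] unfolding K_def by simp
  have sq: "p^2 < \<delta>^2" if "\<bar>p\<bar> < \<delta>" for p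
  proof -
    have "\<bar>p\<bar>^2 < \<delta>^2" by (rule power_strict_mono) (use that in auto)
    then show ?thesis by simp
  qed
  have d1: "((\<lambda>t. K (t, -s) (s, s)) has_real_derivative 0) (at (-s))"
  proof (rule deriv0[OF \<delta>, of _ _ Cb])
    fix t assume "\<bar>t - - s\<bar> < \<delta>"
    then have "(t+s)^2 + 0^2 < \<delta>^2" using sq[of "t+s"] by simp
    from Kb[OF this] show "\<bar>K (t, -s) (s, s) - K (- s, - s) (s, s)\<bar> \<le> Cb * (t - - s)^2"
      unfolding K00 by simp
  qed
  have d2: "((\<lambda>t. K (-s, t) (s, s)) has_real_derivative 0) (at (-s))"
  proof (rule deriv0[OF \<delta>, of _ _ Cb])
    fix t assume "\<bar>t - - s\<bar> < \<delta>"
    then have "0^2 + (t+s)^2 < \<delta>^2" using sq[of "t+s"] by simp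
    from Kb[OF this] show "\<bar>K (-s, t) (s, s) - K (- s, - s) (s, s)\<bar> \<le> Cb * (t - - s)^2"
      unfolding K00 by simp
  qed
  have d3: "((\<lambda>t. K (-s, -s) (t, s)) has_real_derivative 0) (at s)"
  proof (rule deriv0[OF \<delta>, of _ _ Cb])
    fix t assume "\<bar>t - s\<bar> < \<delta>"
    then have "(s-t)^2 + 0^2 < \<delta>^2" using sq[of "s-t"] by (simp add: abs_minus_commute)
    from Kb[OF this] show "\<bar>K (-s, -s) (t, s) - K (-s, -s) (s, s)\<bar> \<le> Cb * (t - s)^2"
      unfolding K00 sym[of t s] by (simp add: power2_commute)
  qed
  have d4: "((\<lambda>t. K (-s, -s) (s, t)) has_real_derivative 0) (at s)"
  proof (rule deriv0[OF \<delta>, of _ _ Cb])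
    fix t assume "\<bar>t - s\<bar> < \<delta>"
    then have "0^2 + (s-t)^2 < \<delta>^2" using sq[of "s-t"] by (simp add: abs_minus_commute)
    from Kb[OF this] show "\<bar>K (-s, -s) (s, t) - K (-s, -s) (s, s)\<bar> \<le> Cb * (t - s)^2"
      unfolding K00 sym[of s t] by (simp add: power2_commute)
  qed
  have dd: "p^2 + q^2 < \<delta>^2" if "dist (x1, x2) (y1, y2) < \<delta>" "p = x1 - y1 \<or> p = y1 - x1" "q = x2 - y2 \<or> q = y2 - x2" for x1 x2 y1 y2 p q :: real
  proof -
    have "sqrt (p^2 + q^2) < \<delta>" using that by (auto simp: dist_Pair_Pair dist_real_def power2_commute)
    then have "(sqrt (p^2 + q^2))^2 < \<delta>^2" by (intro power_strict_mono) auto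
    then show ?thesis by simp
  qed
  have m5: "\<exists>e>0. \<forall>a. a \<noteq> (-s, -s) \<and> dist a (-s, -s) < e \<longrightarrow> K (-s, -s) (s, s) < K a (s, s)"
  proof (intro exI[of _ \<delta>] conjI \<delta> allI impI)
    fix a :: "real \<times> real" assume a: "a \<noteq> (-s, -s) \<and> dist a (-s, -s) < \<delta>"
    obtain a1 a2 where ae: "a = (a1, a2)" by fastforce
    have "(a1 + s)^2 + (a2 + s)^2 < \<delta>^2" by (rule dd[of a1 a2 "-s" "-s"]) (use a ae in auto)
    from Kb[OF this] a ae have "0 < K (-s + (a1 + s), -s + (a2 + s)) (s, s)" by auto
    then show "K (-s, -s) (s, s) < K a (s, s)" unfolding K00 ae by simp
  qed
  have m6: "\<exists>e>0. \<forall>b. b \<noteq> (s, s) \<and> dist b (s, s) < e \<longrightarrow> K (-s, -s) b < K (-s, -s) (s, s)"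
  proof (intro exI[of _ \<delta>] conjI \<delta> allI impI)
    fix b :: "real \<times> real" assume b: "b \<noteq> (s, s) \<and> dist b (s, s) < \<delta>"
    obtain b1 b2 where be: "b = (b1, b2)" by fastforce
    have "(s - b1)^2 + (s - b2)^2 < \<delta>^2" by (rule dd[of b1 b2 s s]) (use b be in auto)
    from Kb[OF this] b be have "0 < K (-s + (s - b1), -s + (s - b2)) (s, s)" by auto
    then show "K (-s, -s) b < K (-s, -s) (s, s)" unfolding be using sym[of b1 b2] K00 by simp
  qed
  show ?thesis using d1 d2 d3 d4 m5 m6 by blast
qed

end
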